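(* Let $(A,H,D,J)$ be a finite-dimensional real spectral triple and let $B\subseteq\mathrm{End}_{\mathbb{C}}(H)$ be a unital complex $*$-subalgebra such that $B'=B^\circ$ and $\mathcal{C}\ell_D(A)\subseteq B$. Then the following are equivalent: (a) the Hodge property $\mathcal{C}\ell_D(A)'=\mathcal{C}\ell_D(A)^\circ$ holds; (b) $\mathcal{C}\ell_D(A)'\subseteq B^\circ$; (c) $\mathcal{C}\ell_D(A)=B$.
   Context: A finite-dimensional real spectral triple $(A,H,D,J)$ consists of a finite-dimensional complex Hilbert space $H$, a unital (real or complex) $*$-subalgebra $A\subseteq\mathrm{End}_{\mathbb{C}}(H)$, a selfadjoint operator $D$ on $H$, and an antilinear isometry $J$ with $J^2=\varepsilon1$, $JD=\varepsilon'DJ$ ($\varepsilon,\varepsilon'\in\{\pm1\}$; in the even case also $J\gamma=\varepsilon''\gamma J$ for a grading $\gamma$ commuting with $A$ and anticommuting with $D$), such that $[a,JbJ^{-1}]=0$ and $[[D,a],JbJ^{-1}]=0$ for all $a,b\in A$. For $\xi\in\mathrm{End}_{\mathbb{C}}(H)$, $\xi^\circ=J\xi^*J^{-1}$; for a subset $S$, $S^\circ=\{\xi^\circ:\xi\in S\}$ and $S'=\{\xi\in\mathrm{End}_{\mathbb{C}}(H):[\xi,\eta]=0\ \forall\eta\in S\}$. $\mathcal{C}\ell_D(A)$ is the complex $*$-subalgebra of $\mathrm{End}_{\mathbb{C}}(H)$ generated by $A$ and the operators $a[D,b]$, $a,b\in A$. *)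

theory Defs
  imports "HOL-Analysis.Analysis"
begin

text \<open>H is modelled as complex ^ 'n (standard inner product), End_C(H) as complex matrices.\<close>

definition adj :: "complex^'n^'n \<Rightarrow> complex^'n^'n" where
  "adj M = (\<chi> i j. cnj (M $ j $ i))"

definition cscale :: "complex \<Rightarrow> complex^'n^'n \<Rightarrow> complex^'n^'n" where
  "cscale c M = (\<chi> i j. c * M $ i $ j)"

definition real_star_subalg :: "(complex^'n^'n) set \<Rightarrow> bool" where
  "real_star_subalg A \<longleftrightarrow> mat 1 \<in> A \<and>
     (\<forall>a\<in>A. \<forall>b\<in>A. a + b \<in> A \<and> a ** b \<in> A) \<and>
     (\<forall>a\<in>A. \<forall>r::real. cscale (complex_of_real r) a \<in> A) \<and>
     (\<forall>a\<in>A. adj a \<in> A)"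

definition complex_star_subalg :: "(complex^'n^'n) set \<Rightarrow> bool" where
  "complex_star_subalg A \<longleftrightarrow> mat 1 \<in> A \<and>
     (\<forall>a\<in>A. \<forall>b\<in>A. a + b \<in> A \<and> a ** b \<in> A) \<and>
     (\<forall>a\<in>A. \<forall>c::complex. cscale c a \<in> A) \<and>
     (\<forall>a\<in>A. adj a \<in> A)"

definition antilinear_isometry :: "(complex^'n \<Rightarrow> complex^'n) \<Rightarrow> bool" where
  "antilinear_isometry J \<longleftrightarrow> (\<forall>x y. J (x + y) = J x + J y) \<and>
     (\<forall>c x. J (c *s x) = cnj c *s J x) \<and> (\<forall>x. norm (J x) = norm x)"

text \<open>Matrix of the (linear) operator J M J^{-1}.\<close>
definition conj_by :: "(complex^'n \<Rightarrow> complex^'n) \<Rightarrow> complex^'n^'n \<Rightarrow> complex^'n^'n" where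
  "conj_by J M = (\<chi> i j. (J (M *v inv J (axis j 1))) $ i)"

definition opp :: "(complex^'n \<Rightarrow> complex^'n) \<Rightarrow> complex^'n^'n \<Rightarrow> complex^'n^'n" where
  "opp J M = conj_by J (adj M)"

definition commutant :: "(complex^'n^'n) set \<Rightarrow> (complex^'n^'n) set" where
  "commutant S = {x. \<forall>y\<in>S. x ** y = y ** x}"

definition CliffD :: "complex^'n^'n \<Rightarrow> (complex^'n^'n) set \<Rightarrow> (complex^'n^'n) set" where
  "CliffD D A = \<Inter>{B. complex_star_subalg B \<and>
      A \<union> {a ** (D ** b - b ** D) | a b. a \<in> A \<and> b \<in> A} \<subseteq> B}"

definition real_spectral_triple ::
  "(complex^'n^'n) set \<Rightarrow> complex^'n^'n \<Rightarrow> (complex^'n \<Rightarrow> complex^'n) \<Rightarrow> bool" where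
  "real_spectral_triple A D J \<longleftrightarrow> real_star_subalg A \<and> adj D = D \<and> antilinear_isometry J \<and>
     (\<exists>\<epsilon>::complex. \<epsilon> \<in> {1, -1} \<and> (\<forall>x. J (J x) = \<epsilon> *s x)) \<and>
     (\<exists>\<epsilon>'::complex. \<epsilon>' \<in> {1, -1} \<and> (\<forall>x. J (D *v x) = \<epsilon>' *s (D *v J x))) \<and>
     (\<forall>a\<in>A. \<forall>b\<in>A. a ** conj_by J b = conj_by J b ** a \<and>
        (D ** a - a ** D) ** conj_by J b = conj_by J b ** (D ** a - a ** D))"

end

theory Submission
  imports Defs
begin
lemma inner_mat: "inner (X::complex^'m::finite^'n::finite) Y = (\<Sum>i\<in>UNIV. \<Sum>j\<in>UNIV. Re (X$i$j * cnj (Y$i$j)))"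
  by (simp add: inner_vec_def inner_complex_def)

lemma adj_inner: "inner ((c::complex^'n::finite^'n) ** Y) Z = inner Y (adj c ** Z)"
proof -
  have "inner (c ** Y) Z = (\<Sum>i\<in>UNIV. \<Sum>j\<in>UNIV. \<Sum>m\<in>UNIV. Re (c$i$m * Y$m$j * cnj (Z$i$j)))"
    unfolding inner_mat
    apply (rule sum.cong, simp)+
    by (simp add: matrix_matrix_mult_def sum_distrib_right Re_sum)
  also have "\<dots> = (\<Sum>i\<in>UNIV. \<Sum>m\<in>UNIV. \<Sum>j\<in>UNIV. Re (c$i$m * Y$m$j * cnj (Z$i$j)))"
    by (rule sum.cong[OF refl], rule sum.swap)
  also have "\<dots> = (\<Sum>m\<in>UNIV. \<Sum>i\<in>UNIV. \<Sum>j\<in>UNIV. Re (c$i$m * Y$m$j * cnj (Z$i$j)))"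
    by (rule sum.swap)
  also have "\<dots> = (\<Sum>m\<in>UNIV. \<Sum>j\<in>UNIV. \<Sum>i\<in>UNIV. Re (c$i$m * Y$m$j * cnj (Z$i$j)))"
    by (rule sum.cong[OF refl], rule sum.swap)
  also have "\<dots> = inner Y (adj c ** Z)"
    unfolding inner_mat
    apply (rule sum.cong, simp)+
    by (simp add: matrix_matrix_mult_def adj_def sum_distrib_left mult_ac Re_sum)
  finally show ?thesis .
qed

definition Pr :: "(complex^'n::finite^'n) set \<Rightarrow> complex^'n^'n \<Rightarrow> complex^'n^'n" where
  "Pr C Y = (SOME y. y \<in> C \<and> (\<forall>w\<in>C. inner (Y - y) w = 0))"

definition Eu :: "'n::finite \<Rightarrow> 'n \<Rightarrow> complex^'n^'n" where
  "Eu l k = (\<chi> a b. if a = l \<and> b = k then 1 else 0)"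
lemma ifm1: "(if P then 1 else 0) * (w::complex) = (if P then w else 0)" by simp
lemma ifm2: "(w::complex) * (if P then 1 else 0) = (if P then w else 0)" by simp
lemma ifm3: "(w::complex) * (if P then u else 0) = (if P then w * u else 0)" by simp
lemma ifm4: "(if P then u else 0) * (w::complex) = (if P then u * w else 0)" by simp
lemma sum_if_out: "(\<Sum>x\<in>S. if P then g x else (0::complex)) = (if P then (\<Sum>x\<in>S. g x) else 0)" by simp
lemma cscale_mat: "cscale z W = cscale z (mat 1) ** (W::complex^'n::finite^'n)"
  by (simp add: cscale_def matrix_matrix_mult_def mat_def vec_eq_iff ifm2 ifm4)
lemma mat_decomp: "(X::complex^'n::finite^'n) = (\<Sum>l\<in>UNIV. \<Sum>k\<in>UNIV. cscale (X$l$k) (Eu l k))"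
  by (simp add: vec_eq_iff cscale_def Eu_def if_if_eq_conj[symmetric] ifm2 ifm3 sum_if_out)

lemma cEu: "((c::complex^'n::finite^'n) ** Eu l k) $ l' $ k' = (if k' = k then c$l'$l else 0)"
  by (simp add: matrix_matrix_mult_def Eu_def ifm2 ifm3 sum_if_out if_if_eq_conj[symmetric] cong: if_cong)

context
  fixes C :: "(complex^'n::finite^'n) set"
  assumes CS: "complex_star_subalg C"
begin

lemma C_one: "mat 1 \<in> C" and C_add: "a \<in> C \<Longrightarrow> b \<in> C \<Longrightarrow> a + b \<in> C"
  and C_mul: "a \<in> C \<Longrightarrow> b \<in> C \<Longrightarrow> a ** b \<in> C"
  and C_sc: "a \<in> C \<Longrightarrow> cscale z a \<in> C" and C_adj: "a \<in> C \<Longrightarrow> adj a \<in> C"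
  using CS unfolding complex_star_subalg_def by auto

lemma C_sub: "subspace C"
proof -
  have "cscale 0 (mat 1) = (0::complex^'n^'n)" by (simp add: cscale_def vec_eq_iff)
  hence "0 \<in> C" using C_sc[OF C_one, of 0] by simp
  moreover have "r *\<^sub>R a = cscale (complex_of_real r) a" for r and a :: "complex^'n^'n"
    by (simp only: vec_eq_iff vector_scaleR_component cscale_def vec_lambda_beta) (simp add: scaleR_conv_of_real)
  ultimately show ?thesis unfolding subspace_def using C_add C_sc by metis
qed

lemma P_ex: "\<exists>y. y \<in> C \<and> (\<forall>w\<in>C. inner (Y - y) w = 0)"
proof -
  obtain y z where "y \<in> span C" "\<And>w. w \<in> span C \<Longrightarrow> orthogonal z w" "Y = y + z"
    using orthogonal_subspace_decomp_exists[of C Y] by metis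
  thus ?thesis using span_eq_iff[of C] C_sub unfolding orthogonal_def
    by (metis add_diff_cancel_left')
qed

lemma P_in: "Pr C Y \<in> C" and P_orth: "w \<in> C \<Longrightarrow> inner (Y - Pr C Y) w = 0"
  using someI_ex[OF P_ex[of Y]] unfolding Pr_def by auto

lemma P_uniq:
  assumes "y \<in> C" "\<And>w. w \<in> C \<Longrightarrow> inner (Y - y) w = 0"
  shows "Pr C Y = y"
proof -
  let ?d = "Pr C Y - y"
  have d: "?d \<in> C" using subspace_diff[OF C_sub P_in assms(1)] .
  have "inner ?d ?d = inner (Y - y) ?d - inner (Y - Pr C Y) ?d"
    by (simp add: inner_diff_left)
  also have "\<dots> = 0" using assms(2)[OF d] P_orth[OF d] by simp
  finally show ?thesis by simp
qed

lemma orth_mult: "c \<in> C \<Longrightarrow> (\<And>w. w \<in> C \<Longrightarrow> inner W w = 0) \<Longrightarrow> w \<in> C \<Longrightarrow> inner (c ** W) w = 0"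
  by (simp add: adj_inner C_adj C_mul)

lemma P_mult: assumes "c \<in> C" shows "Pr C (c ** Y) = c ** Pr C Y"
proof (rule P_uniq)
  show "c ** Pr C Y \<in> C" using C_mul[OF assms P_in] .
  fix w assume "w \<in> C"
  have "c ** Y - c ** Pr C Y = c ** (Y - Pr C Y)"
    by (simp add: vec_eq_iff matrix_matrix_mult_def right_diff_distrib sum_subtractf)
  thus "inner (c ** Y - c ** Pr C Y) w = 0"
    using orth_mult[OF assms P_orth \<open>w \<in> C\<close>] by simp
qed

lemma P_lin: "Pr C X = (\<Sum>l\<in>UNIV. \<Sum>k\<in>UNIV. cscale (X$l$k) (Pr C (Eu l k)))"
proof (rule P_uniq)
  show "(\<Sum>l\<in>UNIV. \<Sum>k\<in>UNIV. cscale (X$l$k) (Pr C (Eu l k))) \<in> C"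
    by (intro subspace_sum[OF C_sub] C_sc P_in)
  fix w assume w: "w \<in> C"
  have "X - (\<Sum>l\<in>UNIV. \<Sum>k\<in>UNIV. cscale (X$l$k) (Pr C (Eu l k)))
      = (\<Sum>l\<in>UNIV. \<Sum>k\<in>UNIV. cscale (X$l$k) (Eu l k - Pr C (Eu l k)))"
    apply (subst (1) mat_decomp)
    by (simp add: sum_subtractf[symmetric] cscale_def vec_eq_iff right_diff_distrib)
  moreover have "inner (cscale (X$l$k) (Eu l k - Pr C (Eu l k))) w = 0" for l k
    apply (subst cscale_mat)
    apply (rule orth_mult[OF C_sc[OF C_one] _ w])
    by (rule P_orth)
  ultimately show "inner (X - (\<Sum>l\<in>UNIV. \<Sum>k\<in>UNIV. cscale (X$l$k) (Pr C (Eu l k)))) w = 0"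
    by (simp add: inner_sum_left)
qed

lemma P_entry: "Pr C X $ i $ j = (\<Sum>l\<in>UNIV. \<Sum>k\<in>UNIV. X$l$k * Pr C (Eu l k) $ i $ j)"
  by (subst P_lin) (simp add: cscale_def)


definition Nm :: "'n \<Rightarrow> 'n \<Rightarrow> complex^'n^'n" where
  "Nm j k = (\<chi> i l. Pr C (Eu l k) $ i $ j)"

lemma Nm_comm: assumes "c \<in> C" shows "Nm j k ** c = c ** Nm j k"
proof -
  have "(c ** Nm j k) $ i $ l = (Nm j k ** c) $ i $ l" for i l
  proof -
    have "(c ** Nm j k) $ i $ l = (c ** Pr C (Eu l k)) $ i $ j"
      by (simp add: Nm_def matrix_matrix_mult_def)
    also have "\<dots> = Pr C (c ** Eu l k) $ i $ j" by (simp add: P_mult[OF assms])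
    also have "\<dots> = (\<Sum>l'\<in>UNIV. \<Sum>k'\<in>UNIV. (c ** Eu l k)$l'$k' * Pr C (Eu l' k') $ i $ j)"
      by (rule P_entry)
    also have "\<dots> = (\<Sum>l'\<in>UNIV. c$l'$l * Pr C (Eu l' k) $ i $ j)"
      by (simp add: cEu ifm4)
    also have "\<dots> = (Nm j k ** c) $ i $ l"
      by (simp add: Nm_def matrix_matrix_mult_def mult.commute)
    finally show ?thesis .
  qed
  thus ?thesis by (simp add: vec_eq_iff)
qed

lemma P_bicomm:
  assumes x: "x \<in> commutant (commutant C)"
  shows "Pr C (x ** X) = x ** Pr C X"
proof -
  have xN: "x ** Nm j k = Nm j k ** x" for j k
    using x Nm_comm unfolding commutant_def by auto
  have "Pr C (x ** X) $ i $ j = (x ** Pr C X) $ i $ j" for i j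
  proof -
    have "Pr C (x ** X) $ i $ j = (\<Sum>l\<in>UNIV. \<Sum>k\<in>UNIV. (x ** X)$l$k * Nm j k $ i $ l)"
      by (subst P_entry) (simp add: Nm_def)
    also have "\<dots> = (\<Sum>k\<in>UNIV. (Nm j k ** (x ** X)) $ i $ k)"
      by (subst sum.swap) (simp add: matrix_matrix_mult_def[of "Nm _ _"] mult.commute)
    also have "\<dots> = (\<Sum>k\<in>UNIV. ((x ** Nm j k) ** X) $ i $ k)"
      by (simp add: matrix_mul_assoc xN)
    also have "\<dots> = (\<Sum>k\<in>UNIV. (x ** (Nm j k ** X)) $ i $ k)"
      by (simp add: matrix_mul_assoc)
    also have "\<dots> = (\<Sum>k\<in>UNIV. \<Sum>m\<in>UNIV. x$i$m * (\<Sum>l\<in>UNIV. Pr C (Eu l k) $ m $ j * X$l$k))"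
      by (simp add: matrix_matrix_mult_def Nm_def)
    also have "\<dots> = (\<Sum>m\<in>UNIV. x$i$m * (\<Sum>k\<in>UNIV. \<Sum>l\<in>UNIV. Pr C (Eu l k) $ m $ j * X$l$k))"
      by (subst sum.swap) (simp add: sum_distrib_left)
    also have "\<dots> = (x ** Pr C X) $ i $ j"
      unfolding matrix_matrix_mult_def vec_lambda_beta
      apply (rule sum.cong[OF refl])
      apply (subst P_entry[of X])
      apply (subst sum.swap) by (simp add: mult.commute)
    finally show ?thesis .
  qed
  thus ?thesis by (simp add: vec_eq_iff)
qed

lemma bicomm: "commutant (commutant C) \<subseteq> C"
proof
  fix x assume x: "x \<in> commutant (commutant C)"
  have P1: "Pr C (mat 1) = mat 1" by (rule P_uniq[OF C_one]) simp
  have "x = Pr C (x ** mat 1)" using P_bicomm[OF x, of "mat 1"] P1 by simp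
  thus "x \<in> C" using P_in by metis
qed

end

lemma CliffD_alg: "complex_star_subalg (CliffD D A)"
  unfolding CliffD_def complex_star_subalg_def by auto

theorem lemma12:
  fixes A B :: "(complex^'n::finite^'n) set" and D :: "complex^'n^'n"
    and J :: "complex^'n \<Rightarrow> complex^'n"
  assumes "real_spectral_triple A D J"
    and "complex_star_subalg B"
    and "commutant B = opp J ` B"
    and "CliffD D A \<subseteq> B"
  shows "(commutant (CliffD D A) = opp J ` CliffD D A \<longleftrightarrow> commutant (CliffD D A) \<subseteq> opp J ` B)
       \<and> (commutant (CliffD D A) \<subseteq> opp J ` B \<longleftrightarrow> CliffD D A = B)"
proof -
  let ?C = "CliffD D A"
  have BC: "commutant B \<subseteq> commutant ?C" using assms(4) unfolding commutant_def by auto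
  have bc: "commutant ?C \<subseteq> opp J ` B \<Longrightarrow> ?C = B"
  proof -
    assume h: "commutant ?C \<subseteq> opp J ` B"
    hence "commutant ?C = commutant B" using BC assms(3) by auto
    hence "B \<subseteq> commutant (commutant ?C)" unfolding commutant_def by auto
    thus "?C = B" using bicomm[OF CliffD_alg] assms(4) by blast
  qed
  show ?thesis
  proof (intro conjI iffI)
    assume "commutant ?C = opp J ` ?C" thus "commutant ?C \<subseteq> opp J ` B" using assms(4) by auto
  next
    assume "commutant ?C \<subseteq> opp J ` B" thus "commutant ?C = opp J ` ?C" using bc assms(3) by simp
  next
    assume "commutant ?C \<subseteq> opp J ` B" thus "?C = B" by (rule bc)
  next
    assume "?C = B" thus "commutant ?C \<subseteq> opp J ` B" using assms(3) by simp
  qed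
qed

end
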